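(* Let $H\in\mathcal{H}_2$, let $n\ge 1$ and $\boldsymbol\mu=(\mu_1,\dots,\mu_n)\in\mathbb{C}_+^n$, and let $P(\boldsymbol\mu)$ be the orthogonal projector of $\mathcal{H}_2$ onto $\mathcal{V}(\boldsymbol\mu)=\operatorname{span}\{v[\mu_j]\}_{j=1}^n$. Suppose $\mathcal{S}\subset\mathcal{H}_2$ admits a parameterization $H_r(\cdot;\boldsymbol\theta)$ such that $\mathcal{S}=\{H_r(\cdot;\boldsymbol\theta):\boldsymbol\theta\in\mathcal{D}\}$ with $\mathcal{D}\subset\mathbb{R}^p$ open. Let $$\mathcal{T}(\boldsymbol\theta)=\operatorname{span}\Big\{\tfrac{\partial H_r(\cdot,\boldsymbol\theta)}{\partial\theta_1},\dots,\tfrac{\partial H_r(\cdot,\boldsymbol\theta)}{\partial\theta_p}\Big\}.$$ If $H_r(\cdot,\widehat{\boldsymbol\theta})$ is a local optimizer of the projected problem $\min_{H_r\in\mathcal{S}}\|P(\boldsymbol\mu)[H-H_r]\|_{\mathcal{H}_2}^2$ and $\operatorname{Range}P(\boldsymbol\mu)\supseteq\mathcal{T}(\widehat{\boldsymbol\theta})$, then $H_r(\cdot,\widehat{\boldsymbol\theta})$ is also a local optimizer of the original problem $\min_{H_r\in\mathcal{S}}\|H-H_r\|_{\mathcal{H}_2}^2$.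
   Context: $\mathcal{H}_2$ denotes the Hilbert space of functions analytic in the right half-plane with inner product $\langle F,G\rangle_{\mathcal{H}_2}=\frac{1}{2\pi}\int_{-\infty}^{\infty}\overline{F(\mathrm{i}\omega)}G(\mathrm{i}\omega)\,d\omega$ and norm $\|F\|_{\mathcal{H}_2}^2=\langle F,F\rangle_{\mathcal{H}_2}$. $\mathbb{C}_+=\{\mu\in\mathbb{C}:\operatorname{Re}\mu>0\}$. For $\mu\in\mathbb{C}_+$, $v[\mu]\in\mathcal{H}_2$ is the reproducing kernel $v[\mu](z)=(z+\overline{\mu})^{-1}$, satisfying $\langle v[\mu],F\rangle_{\mathcal{H}_2}=F(\mu)$. Since $\mathcal{S}$ is nonconvex, "local optimizer" is understood in the sense of the first order optimality conditions: $H_r(\cdot,\widehat{\boldsymbol\theta})$ is a local optimizer of the projected problem if $\langle P(\boldsymbol\mu)[H-H_r(\cdot,\widehat{\boldsymbol\theta})],T\rangle_{\mathcal{H}_2}=0$ for all $T\in\mathcal{T}(\widehat{\boldsymbol\theta})$, and of the original problem if $\langle H-H_r(\cdot,\widehat{\boldsymbol\theta}),T\rangle_{\mathcal{H}_2}=0$ for all $T\in\mathcal{T}(\widehat{\boldsymbol\theta})$. *)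

theory Defs
  imports "HOL-Analysis.Analysis"
begin

definition Cplus :: "complex set" where
  "Cplus = {z. 0 < Re z}"

text \<open>An element is represented by a function
  complex \<Rightarrow> complex that is analytic on the open right half-plane, has uniformly bounded
  L2 norms on the vertical lines Re z = x > 0, and whose values on the imaginary axis are
  its (a.e. radial) boundary values, which are square integrable.\<close>
definition H2 :: "(complex \<Rightarrow> complex) \<Rightarrow> bool" where
  "H2 f \<longleftrightarrow>
     f holomorphic_on Cplus \<and>
     (\<exists>B. \<forall>x>0. (\<lambda>\<omega>. (cmod (f (Complex x \<omega>)))\<^sup>2) integrable_on UNIV \<and>
                 integral UNIV (\<lambda>\<omega>. (cmod (f (Complex x \<omega>)))\<^sup>2) \<le> B) \<and>
     (AE \<omega> in lborel. ((\<lambda>x. f (Complex x \<omega>)) \<longlongrightarrow> f (Complex 0 \<omega>)) (at_right 0)) \<and>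
     (\<lambda>\<omega>. f (Complex 0 \<omega>)) measurable_on UNIV \<and>
     (\<lambda>\<omega>. (cmod (f (Complex 0 \<omega>)))\<^sup>2) integrable_on UNIV"

definition h2_inner :: "(complex \<Rightarrow> complex) \<Rightarrow> (complex \<Rightarrow> complex) \<Rightarrow> complex" where
  "h2_inner F G = (1 / (2 * of_real pi)) *
      integral UNIV (\<lambda>\<omega>::real. cnj (F (\<i> * of_real \<omega>)) * G (\<i> * of_real \<omega>))"

definition kern :: "complex \<Rightarrow> complex \<Rightarrow> complex" where
  "kern \<mu> = (\<lambda>z. 1 / (z + cnj \<mu>))"

text \<open>V(mu) = span of v[mu_1],...,v[mu_n] (H2 elements are identified with functions
  agreeing on the open right half-plane).\<close>
definition Vspace :: "nat \<Rightarrow> (nat \<Rightarrow> complex) \<Rightarrow> (complex \<Rightarrow> complex) set" where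
  "Vspace n \<mu> = {f. H2 f \<and> (\<exists>c::nat \<Rightarrow> complex. \<forall>z\<in>Cplus. f z = (\<Sum>j<n. c j * kern (\<mu> j) z))}"

definition is_orth_proj :: "nat \<Rightarrow> (nat \<Rightarrow> complex)
     \<Rightarrow> ((complex \<Rightarrow> complex) \<Rightarrow> (complex \<Rightarrow> complex)) \<Rightarrow> bool" where
  "is_orth_proj n \<mu> P \<longleftrightarrow>
     (\<forall>F. H2 F \<longrightarrow> P F \<in> Vspace n \<mu> \<and>
          (\<forall>G\<in>Vspace n \<mu>. h2_inner G (\<lambda>z. F z - P F z) = 0))"

definition pderiv_param :: "(real^'p \<Rightarrow> complex \<Rightarrow> complex) \<Rightarrow> real^'p \<Rightarrow> 'p \<Rightarrow> complex \<Rightarrow> complex" where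
  "pderiv_param Hr \<theta> i = (\<lambda>z. vector_derivative (\<lambda>t::real. Hr (\<theta> + t *\<^sub>R axis i 1) z) (at 0))"

definition Tspace :: "(real^'p \<Rightarrow> complex \<Rightarrow> complex) \<Rightarrow> real^'p \<Rightarrow> (complex \<Rightarrow> complex) set" where
  "Tspace Hr \<theta> = {T. H2 T \<and> (\<exists>c::'p \<Rightarrow> complex.
       \<forall>z\<in>Cplus. T z = (\<Sum>i\<in>UNIV. c i * pderiv_param Hr \<theta> i z))}"

end

theory Submission
  imports Defs
begin

lemma sq_bound: "0 \<le> (a::real) \<Longrightarrow> 0 \<le> b \<Longrightarrow> a * b \<le> a\<^sup>2 + b\<^sup>2"
proof -
  assume "0 \<le> a" "0 \<le> b"
  then have "0 \<le> a * b" by simp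
  moreover have "2 * a * b \<le> a\<^sup>2 + b\<^sup>2" by (rule sum_squares_bound)
  ultimately show ?thesis by linarith
qed

lemma sq_bound2: "((a::real) + b)\<^sup>2 \<le> 2 * a\<^sup>2 + 2 * b\<^sup>2"
proof -
  have "2 * a * b \<le> a\<^sup>2 + b\<^sup>2" by (rule sum_squares_bound)
  moreover have "(a + b)\<^sup>2 = a\<^sup>2 + b\<^sup>2 + 2 * a * b" by (simp add: power2_sum)
  ultimately show ?thesis by linarith
qed

lemma meas_borel: "(f::real \<Rightarrow> 'b::euclidean_space) measurable_on UNIV \<Longrightarrow> f \<in> borel_measurable (lebesgue_on UNIV)"
  using measurable_on_iff_borel_measurable[of "UNIV::real set" f] by simp

lemma L2_prod:
  fixes u v :: "real \<Rightarrow> complex"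
  assumes um: "u measurable_on UNIV" and vm: "v measurable_on UNIV"
    and ui: "(\<lambda>w. (cmod (u w))\<^sup>2) integrable_on UNIV"
    and vi: "(\<lambda>w. (cmod (v w))\<^sup>2) integrable_on UNIV"
  shows "(\<lambda>w. cnj (u w) * v w) integrable_on UNIV"
proof -
  have c: "continuous_on UNIV (\<lambda>x::complex\<times>complex. cnj (fst x) * snd x)"
    by (intro continuous_intros)
  have m: "(\<lambda>w. cnj (u w) * v w) measurable_on UNIV"
    using measurable_on_combine[OF um vm, of "\<lambda>a b. cnj a * b"] c by simp
  show ?thesis
  proof (rule measurable_bounded_by_integrable_imp_integrable)
    show "(\<lambda>w. cnj (u w) * v w) \<in> borel_measurable (lebesgue_on UNIV)"
      using m by (rule meas_borel)
    show "(\<lambda>w. (cmod (u w))\<^sup>2 + (cmod (v w))\<^sup>2) integrable_on UNIV"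
      using ui vi by (rule integrable_add)
    fix w
    have "cmod (cnj (u w) * v w) = cmod (u w) * cmod (v w)" by (simp add: norm_mult)
    also have "\<dots> \<le> (cmod (u w))\<^sup>2 + (cmod (v w))\<^sup>2"
      by (rule sq_bound) simp_all
    finally show "cmod (cnj (u w) * v w) \<le> (cmod (u w))\<^sup>2 + (cmod (v w))\<^sup>2" .
  next
    show "UNIV \<in> sets lebesgue" by simp
  qed
qed

lemma L2_diff:
  fixes u v :: "real \<Rightarrow> complex"
  assumes um: "u measurable_on UNIV" and vm: "v measurable_on UNIV"
    and ui: "(\<lambda>w. (cmod (u w))\<^sup>2) integrable_on UNIV"
    and vi: "(\<lambda>w. (cmod (v w))\<^sup>2) integrable_on UNIV"
  shows "(\<lambda>w. (cmod (u w - v w))\<^sup>2) integrable_on UNIV"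
    "integral UNIV (\<lambda>w. (cmod (u w - v w))\<^sup>2) \<le> 2 * integral UNIV (\<lambda>w. (cmod (u w))\<^sup>2) + 2 * integral UNIV (\<lambda>w. (cmod (v w))\<^sup>2)"
proof -
  have c: "continuous_on UNIV (\<lambda>x::complex\<times>complex. (cmod (fst x - snd x))\<^sup>2)"
    by (intro continuous_intros)
  have m: "(\<lambda>w. (cmod (u w - v w))\<^sup>2) measurable_on UNIV"
    using measurable_on_combine[OF um vm, of "\<lambda>a b. (cmod (a - b))\<^sup>2"] c by simp
  have b: "\<And>w. (cmod (u w - v w))\<^sup>2 \<le> 2 * (cmod (u w))\<^sup>2 + 2 * (cmod (v w))\<^sup>2"
  proof -
    fix w
    have "cmod (u w - v w) \<le> cmod (u w) + cmod (v w)" by (rule norm_triangle_ineq4)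
    hence "(cmod (u w - v w))\<^sup>2 \<le> (cmod (u w) + cmod (v w))\<^sup>2"
      by (rule power_mono) simp
    also have "\<dots> \<le> 2 * (cmod (u w))\<^sup>2 + 2 * (cmod (v w))\<^sup>2"
      by (rule sq_bound2)
    finally show "(cmod (u w - v w))\<^sup>2 \<le> 2 * (cmod (u w))\<^sup>2 + 2 * (cmod (v w))\<^sup>2" .
  qed
  have a1: "(\<lambda>w. 2 * (cmod (u w))\<^sup>2) integrable_on UNIV" using integrable_on_cmult_left[OF ui, of 2] by simp
  have a2: "(\<lambda>w. 2 * (cmod (v w))\<^sup>2) integrable_on UNIV" using integrable_on_cmult_left[OF vi, of 2] by simp
  have gi: "(\<lambda>w. 2 * (cmod (u w))\<^sup>2 + 2 * (cmod (v w))\<^sup>2) integrable_on UNIV"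
    using a1 a2 by (rule integrable_add)
  show i: "(\<lambda>w. (cmod (u w - v w))\<^sup>2) integrable_on UNIV"
  proof (rule measurable_bounded_by_integrable_imp_integrable)
    show "(\<lambda>w. (cmod (u w - v w))\<^sup>2) \<in> borel_measurable (lebesgue_on UNIV)"
      using m by (rule meas_borel)
    show "(\<lambda>w. 2 * (cmod (u w))\<^sup>2 + 2 * (cmod (v w))\<^sup>2) integrable_on UNIV" by (rule gi)
    show "UNIV \<in> sets lebesgue" by simp
    fix w :: real
    show "norm ((cmod (u w - v w))\<^sup>2) \<le> 2 * (cmod (u w))\<^sup>2 + 2 * (cmod (v w))\<^sup>2"
      using b[of w] by simp
  qed
  have "integral UNIV (\<lambda>w. (cmod (u w - v w))\<^sup>2) \<le> integral UNIV (\<lambda>w. 2 * (cmod (u w))\<^sup>2 + 2 * (cmod (v w))\<^sup>2)"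
    by (rule integral_le[OF i gi b])
  also have "\<dots> = integral UNIV (\<lambda>w. 2 * (cmod (u w))\<^sup>2) + integral UNIV (\<lambda>w. 2 * (cmod (v w))\<^sup>2)"
    by (rule integral_add[OF a1 a2])
  also have "\<dots> = 2 * integral UNIV (\<lambda>w. (cmod (u w))\<^sup>2) + 2 * integral UNIV (\<lambda>w. (cmod (v w))\<^sup>2)"
    by (simp only: integral_mult_right)
  finally show "integral UNIV (\<lambda>w. (cmod (u w - v w))\<^sup>2) \<le> 2 * integral UNIV (\<lambda>w. (cmod (u w))\<^sup>2) + 2 * integral UNIV (\<lambda>w. (cmod (v w))\<^sup>2)" .
qed

lemma Complex0: "Complex 0 w = \<i> * of_real w"
  by (simp add: complex_eq_iff)

lemma H2_axis:
  assumes "H2 f"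
  shows "(\<lambda>w. f (\<i> * of_real w)) measurable_on UNIV"
    "(\<lambda>w. (cmod (f (\<i> * of_real w)))\<^sup>2) integrable_on UNIV"
  using assms unfolding H2_def Complex0 by auto

lemma h2_integrable:
  assumes "H2 f" "H2 g"
  shows "(\<lambda>w. cnj (f (\<i> * of_real w)) * g (\<i> * of_real w)) integrable_on UNIV"
  using L2_prod[OF H2_axis(1)[OF assms(1)] H2_axis(1)[OF assms(2)] H2_axis(2)[OF assms(1)] H2_axis(2)[OF assms(2)]] .

lemma line_meas:
  assumes "f holomorphic_on Cplus" "x > 0"
  shows "(\<lambda>w. f (Complex x w)) measurable_on UNIV"
proof (rule continuous_imp_measurable_on)
  have c: "continuous_on Cplus f" using assms(1) holomorphic_on_imp_continuous_on by blast
  have "continuous_on UNIV (\<lambda>w. Complex x w)"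
    by (simp add: Complex_eq continuous_intros)
  moreover have "(\<lambda>w. Complex x w) ` UNIV \<subseteq> Cplus" using assms(2) by (auto simp: Cplus_def)
  ultimately show "continuous_on UNIV (\<lambda>w. f (Complex x w))"
    using continuous_on_compose2[OF c] by blast
qed

lemma H2_diff:
  assumes f: "H2 f" and g: "H2 g"
  shows "H2 (\<lambda>z. f z - g z)"
proof -
  obtain Bf where Bf: "\<forall>x>0. (\<lambda>\<omega>. (cmod (f (Complex x \<omega>)))\<^sup>2) integrable_on UNIV \<and>
                 integral UNIV (\<lambda>\<omega>. (cmod (f (Complex x \<omega>)))\<^sup>2) \<le> Bf"
    using f unfolding H2_def by blast
  obtain Bg where Bg: "\<forall>x>0. (\<lambda>\<omega>. (cmod (g (Complex x \<omega>)))\<^sup>2) integrable_on UNIV \<and>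
                 integral UNIV (\<lambda>\<omega>. (cmod (g (Complex x \<omega>)))\<^sup>2) \<le> Bg"
    using g unfolding H2_def by blast
  have hf: "f holomorphic_on Cplus" and hg: "g holomorphic_on Cplus" using f g unfolding H2_def by auto
  have "\<forall>x>0. (\<lambda>\<omega>. (cmod (f (Complex x \<omega>) - g (Complex x \<omega>)))\<^sup>2) integrable_on UNIV \<and>
                 integral UNIV (\<lambda>\<omega>. (cmod (f (Complex x \<omega>) - g (Complex x \<omega>)))\<^sup>2) \<le> 2 * Bf + 2 * Bg"
  proof (intro allI impI conjI)
    fix x :: real assume x: "x > 0"
    note L = L2_diff[OF line_meas[OF hf x] line_meas[OF hg x] Bf[rule_format, OF x, THEN conjunct1] Bg[rule_format, OF x, THEN conjunct1]]
    show "(\<lambda>\<omega>. (cmod (f (Complex x \<omega>) - g (Complex x \<omega>)))\<^sup>2) integrable_on UNIV" using L(1) .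
    show "integral UNIV (\<lambda>\<omega>. (cmod (f (Complex x \<omega>) - g (Complex x \<omega>)))\<^sup>2) \<le> 2 * Bf + 2 * Bg"
      using L(2) Bf[rule_format, OF x, THEN conjunct2] Bg[rule_format, OF x, THEN conjunct2] by linarith
  qed
  moreover have "AE \<omega> in lborel. ((\<lambda>x. f (Complex x \<omega>) - g (Complex x \<omega>)) \<longlongrightarrow> f (Complex 0 \<omega>) - g (Complex 0 \<omega>)) (at_right 0)"
  proof -
    have "AE \<omega> in lborel. ((\<lambda>x. f (Complex x \<omega>)) \<longlongrightarrow> f (Complex 0 \<omega>)) (at_right 0)"
      "AE \<omega> in lborel. ((\<lambda>x. g (Complex x \<omega>)) \<longlongrightarrow> g (Complex 0 \<omega>)) (at_right 0)"
      using f g unfolding H2_def by auto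
    then show ?thesis by eventually_elim (rule tendsto_diff)
  qed
  moreover have "(\<lambda>\<omega>. f (Complex 0 \<omega>) - g (Complex 0 \<omega>)) measurable_on UNIV"
    using f g unfolding H2_def by (intro measurable_on_diff) auto
  moreover have "(\<lambda>\<omega>. (cmod (f (Complex 0 \<omega>) - g (Complex 0 \<omega>)))\<^sup>2) integrable_on UNIV"
    using f g unfolding H2_def by (intro L2_diff(1)) auto
  moreover have "(\<lambda>z. f z - g z) holomorphic_on Cplus"
    using hf hg by (intro holomorphic_intros)
  ultimately show ?thesis unfolding H2_def by blast
qed

lemma H2_ae_eq:
  assumes f: "H2 f" and g: "H2 g" and eq: "\<forall>z\<in>Cplus. f z = g z"
  shows "AE \<omega> in lborel. f (Complex 0 \<omega>) = g (Complex 0 \<omega>)"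
proof -
  have "AE \<omega> in lborel. ((\<lambda>x. f (Complex x \<omega>)) \<longlongrightarrow> f (Complex 0 \<omega>)) (at_right 0)"
      "AE \<omega> in lborel. ((\<lambda>x. g (Complex x \<omega>)) \<longlongrightarrow> g (Complex 0 \<omega>)) (at_right 0)"
      using f g unfolding H2_def by auto
  then show ?thesis
  proof eventually_elim
    case (elim \<omega>)
    have ev: "\<forall>\<^sub>F x in at_right 0. f (Complex x \<omega>) = g (Complex x \<omega>)"
      using eventually_at_right_less[of "0::real"]
      by eventually_elim (use eq in \<open>auto simp: Cplus_def\<close>)
    have "((\<lambda>x. g (Complex x \<omega>)) \<longlongrightarrow> f (Complex 0 \<omega>)) (at_right 0)"
      using Lim_transform_eventually[OF elim(1) ev] .
    then show ?case using elim(2) tendsto_unique[OF trivial_limit_at_right_real] by blast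
  qed
qed

lemma AE_negligible:
  assumes "AE \<omega> in lborel. P (\<omega>::real)"
  shows "\<exists>N. negligible N \<and> {\<omega>. \<not> P \<omega>} \<subseteq> N"
proof -
  obtain N where N: "{x \<in> space lborel. \<not> P x} \<subseteq> N" "emeasure lborel N = 0" "N \<in> sets lborel"
    using assms by (auto elim!: AE_E)
  have "N \<in> null_sets lebesgue" using N(2,3) by (intro null_sets_completionI) auto
  then show ?thesis using N(1) negligible_iff_null_sets by auto
qed

lemma h2_inner_ae:
  assumes f: "H2 f" and g: "H2 g" and eq: "\<forall>z\<in>Cplus. f z = g z"
  shows "h2_inner f X = h2_inner g X"
proof -
  obtain N where N: "negligible N" "{\<omega>. \<not> f (Complex 0 \<omega>) = g (Complex 0 \<omega>)} \<subseteq> N"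
    using AE_negligible[OF H2_ae_eq[OF f g eq]] by blast
  have "integral UNIV (\<lambda>\<omega>::real. cnj (f (\<i> * of_real \<omega>)) * X (\<i> * of_real \<omega>))
      = integral UNIV (\<lambda>\<omega>::real. cnj (g (\<i> * of_real \<omega>)) * X (\<i> * of_real \<omega>))"
  proof (rule integral_spike[OF N(1)])
    have N2: "\<And>\<omega>. \<omega> \<notin> N \<Longrightarrow> f (\<i> * of_real \<omega>) = g (\<i> * of_real \<omega>)"
      using N(2) unfolding Complex0 by blast
    fix x assume "x \<in> UNIV - N"
    then show "cnj (g (\<i> * of_real x)) * X (\<i> * of_real x) = cnj (f (\<i> * of_real x)) * X (\<i> * of_real x)"
      using N2[of x] by simp
  qed
  then show ?thesis unfolding h2_inner_def by simp
qed

lemma h2_inner_cnj: "h2_inner F G = cnj (h2_inner G F)"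
  unfolding h2_inner_def by (simp add: integral_cnj mult.commute)

theorem lemma1p1:
  fixes H :: "complex \<Rightarrow> complex"
    and n :: nat and \<mu> :: "nat \<Rightarrow> complex"
    and P :: "(complex \<Rightarrow> complex) \<Rightarrow> (complex \<Rightarrow> complex)"
    and Hr :: "real^'p \<Rightarrow> complex \<Rightarrow> complex"
    and D :: "(real^'p) set" and \<theta>h :: "real^'p"
  assumes H: "H2 H"
    and n: "n \<ge> 1"
    and mu: "\<forall>j<n. 0 < Re (\<mu> j)"
    and P: "is_orth_proj n \<mu> P"
    and D: "open D"
    and S: "\<forall>\<theta>\<in>D. H2 (Hr \<theta>)"
    and th: "\<theta>h \<in> D"
    and diff: "\<forall>i. \<forall>z\<in>Cplus. (\<lambda>t::real. Hr (\<theta>h + t *\<^sub>R axis i 1) z) differentiable (at 0)"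
    and partH2: "\<forall>i. \<exists>G. H2 G \<and> (\<forall>z\<in>Cplus. G z = pderiv_param Hr \<theta>h i z)"
    and projopt: "\<forall>T\<in>Tspace Hr \<theta>h. h2_inner (P (\<lambda>z. H z - Hr \<theta>h z)) T = 0"
    and range: "\<forall>T\<in>Tspace Hr \<theta>h. \<exists>G. H2 G \<and> (\<forall>z\<in>Cplus. T z = P G z)"
  shows "\<forall>T\<in>Tspace Hr \<theta>h. h2_inner (\<lambda>z. H z - Hr \<theta>h z) T = 0"

proof
  fix T assume T: "T \<in> Tspace Hr \<theta>h"
  define F where "F = (\<lambda>z. H z - Hr \<theta>h z)"
  have HF: "H2 F" unfolding F_def using H2_diff[OF H S[rule_format, OF th]] .
  have HT: "H2 T" using T unfolding Tspace_def by auto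
  obtain G where G: "H2 G" "\<forall>z\<in>Cplus. T z = P G z" using range T by blast
  have PG: "P G \<in> Vspace n \<mu>" "\<forall>V\<in>Vspace n \<mu>. h2_inner V (\<lambda>z. G z - P G z) = 0"
    using P G(1) unfolding is_orth_proj_def by auto
  have PF: "P F \<in> Vspace n \<mu>" "\<forall>V\<in>Vspace n \<mu>. h2_inner V (\<lambda>z. F z - P F z) = 0"
    using P HF unfolding is_orth_proj_def by auto
  have HPG: "H2 (P G)" using PG(1) unfolding Vspace_def by auto
  have HPF: "H2 (P F)" using PF(1) unfolding Vspace_def by auto
  have HFP: "H2 (\<lambda>z. F z - P F z)" using H2_diff[OF HF HPF] .
  have "h2_inner T (\<lambda>z. F z - P F z) = h2_inner (P G) (\<lambda>z. F z - P F z)"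
    using h2_inner_ae[OF HT HPG G(2)] .
  also have "\<dots> = 0" using PF(2) PG(1) by blast
  finally have o1: "h2_inner (\<lambda>z. F z - P F z) T = 0" using h2_inner_cnj by (metis complex_cnj_zero)
  have o2: "h2_inner (P F) T = 0" using projopt T unfolding F_def by blast
  have i1: "(\<lambda>w. cnj (F (\<i> * of_real w) - P F (\<i> * of_real w)) * T (\<i> * of_real w)) integrable_on UNIV"
    using h2_integrable[OF HFP HT] by simp
  have i2: "(\<lambda>w. cnj (P F (\<i> * of_real w)) * T (\<i> * of_real w)) integrable_on UNIV"
    using h2_integrable[OF HPF HT] by simp
  have "h2_inner F T = h2_inner (\<lambda>z. F z - P F z) T + h2_inner (P F) T"
  proof -
    have fe: "(\<lambda>w. cnj (F (\<i> * of_real w) - P F (\<i> * of_real w)) * T (\<i> * of_real w) + cnj (P F (\<i> * of_real w)) * T (\<i> * of_real w))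
       = (\<lambda>w. cnj (F (\<i> * of_real w)) * T (\<i> * of_real w))"
      by (rule ext) (simp add: algebra_simps)
    have "integral UNIV (\<lambda>w. cnj (F (\<i> * of_real w)) * T (\<i> * of_real w))
       = integral UNIV (\<lambda>w. cnj (F (\<i> * of_real w) - P F (\<i> * of_real w)) * T (\<i> * of_real w))
         + integral UNIV (\<lambda>w. cnj (P F (\<i> * of_real w)) * T (\<i> * of_real w))"
      using integral_add[OF i1 i2] unfolding fe .
    then show ?thesis unfolding h2_inner_def by (simp only: distrib_left)
  qed
  then have "h2_inner F T = 0" using o1 o2 by (simp only: add_0)
  then show "h2_inner (\<lambda>z. H z - Hr \<theta>h z) T = 0" unfolding F_def .
qed

end
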